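(* Let $(X,\to,d_A)$ be a metric transition system over a finite set $A$ of actions, and let $\alpha\colon\mathit{DPMet}(\mathcal P(X))\to\mathrm{Pre}(\mathcal P(X))$ be $\alpha(d)=\{(X_1,X_2)\mid d(X_1,X_2)=0\}$. Then $\mu\,\beta_t=\alpha(\overline{\mu\,\beta_T})$, where $\mu\,\beta_t$ is the least fixpoint of $\beta_t$ in $(\mathit{Eq}(\mathcal P(X)),\supseteq)$, $\mu\,\beta_T$ is the least fixpoint of $\beta_T$ in $(\mathit{DPMet}(\mathcal P(X)),\le)$, and $\overline{d}(Y_1,Y_2)=\max\{d(Y_1,Y_2),d(Y_2,Y_1)\}$ denotes symmetrization.
   Context: A metric transition system: $(X,\to,d_A)$, $\to\subseteq X\times A\times X$, $d_A$ a metric on $A$ with values in $[0,1]$. $r\oplus s=\min\{r+s,1\}$, $r\ominus s=\max\{0,r-s\}$. $\mathit{DPMet}(Y)$: directed pseudo-metrics on $Y$ ($d(y,y)=0$, $d(x,z)\le d(x,y)\oplus d(y,z)$, values in $[0,1]$), ordered pointwise; $\mathrm{Pre}(Y)$, $\mathit{Eq}(Y)$: preorders, equivalences on $Y$. Qualitative: $\Diamond_a(S)=\{x\mid\exists x'\in S\colon x\xrightarrow{a}x'\}$; $\alpha_t(\mathcal S)=\{(X_1,X_2)\mid\forall S\in\mathcal S\colon(X_1\cap S\neq\emptyset\iff X_2\cap S\neq\emptyset)\}$, $\gamma_t(R)=\{S\subseteq X\mid\forall(X_1,X_2)\in R\colon(X_1\cap S\neq\emptyset\iff X_2\cap S\neq\emptyset)\}$,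 $\mathit{lo}_t(\mathcal S)=\bigcup_{a}\{\Diamond_a(S)\mid S\in\mathcal S\}\cup\{X\}$, $\beta_t=\alpha_t\circ\mathit{lo}_t\circ\gamma_t$. Quantitative: $\bigcirc_af(x)=\bigvee\{(1-d_A(b,a))\land f(x')\mid x\xrightarrow{b}x'\}$, $\tilde f(Y)=\bigvee_{x\in Y}f(x)$, $\alpha_T(\mathcal F)(X_1,X_2)=\bigvee_{f\in\mathcal F}(\tilde f(X_1)\ominus\tilde f(X_2))$, $\gamma_T(d)=\{f\mid\forall X_1,X_2\colon\tilde f(X_1)\ominus\tilde f(X_2)\le d(X_1,X_2)\}$, $\mathit{lo}_T(\mathcal F)=\bigcup_a\{\bigcirc_af\mid f\in\mathrm{cl}^{\mathrm{sh}}(\mathcal F)\}\cup\{1\}$ with $\mathrm{cl}^{\mathrm{sh}}$ the closure under constant shifts $f\mapsto f\ominus c$, $f\mapsto f\oplus c$, and $\beta_T=\alpha_T\circ\mathit{lo}_T\circ\gamma_T$. *)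

theory Defs
  imports Complex_Main
begin

(* supremum in [0,1]; the empty supremum is 0 (bottom of [0,1]) *)
definition sup01 :: "real set \<Rightarrow> real" where
  "sup01 S = (if S = {} then 0 else Sup S)"

definition tplus :: "real \<Rightarrow> real \<Rightarrow> real" where
  "tplus r s = min (r + s) 1"

definition tminus :: "real \<Rightarrow> real \<Rightarrow> real" where
  "tminus r s = max 0 (r - s)"

definition metric01 :: "('a \<Rightarrow> 'a \<Rightarrow> real) \<Rightarrow> bool" where
  "metric01 dA \<longleftrightarrow> (\<forall>a b. 0 \<le> dA a b \<and> dA a b \<le> 1) \<and> (\<forall>a b. dA a b = 0 \<longleftrightarrow> a = b)
     \<and> (\<forall>a b. dA a b = dA b a) \<and> (\<forall>a b c. dA a c \<le> dA a b + dA b c)"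

definition dpmet :: "('y \<Rightarrow> 'y \<Rightarrow> real) \<Rightarrow> bool" where
  "dpmet d \<longleftrightarrow> (\<forall>y. d y y = 0) \<and> (\<forall>x y z. d x z \<le> tplus (d x y) (d y z))
     \<and> (\<forall>x y. 0 \<le> d x y \<and> d x y \<le> 1)"

definition Diamond :: "('x \<times> 'a \<times> 'x) set \<Rightarrow> 'a \<Rightarrow> 'x set \<Rightarrow> 'x set" where
  "Diamond T a S = {x. \<exists>x'\<in>S. (x, a, x') \<in> T}"

definition alpha_t :: "'x set set \<Rightarrow> ('x set \<times> 'x set) set" where
  "alpha_t SS = {(X1, X2). \<forall>S\<in>SS. (X1 \<inter> S \<noteq> {} \<longleftrightarrow> X2 \<inter> S \<noteq> {})}"

definition gamma_t :: "('x set \<times> 'x set) set \<Rightarrow> 'x set set" where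
  "gamma_t R = {S. \<forall>(X1, X2)\<in>R. (X1 \<inter> S \<noteq> {} \<longleftrightarrow> X2 \<inter> S \<noteq> {})}"

definition lo_t :: "('x \<times> 'a \<times> 'x) set \<Rightarrow> 'x set set \<Rightarrow> 'x set set" where
  "lo_t T SS = (\<Union>a. Diamond T a ` SS) \<union> {UNIV}"

definition beta_t :: "('x \<times> 'a \<times> 'x) set \<Rightarrow> ('x set \<times> 'x set) set \<Rightarrow> ('x set \<times> 'x set) set" where
  "beta_t T R = alpha_t (lo_t T (gamma_t R))"

definition Next :: "('x \<times> 'a \<times> 'x) set \<Rightarrow> ('a \<Rightarrow> 'a \<Rightarrow> real) \<Rightarrow> 'a \<Rightarrow> ('x \<Rightarrow> real) \<Rightarrow> 'x \<Rightarrow> real" where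
  "Next T dA a f x = sup01 {min (1 - dA b a) (f x') | b x'. (x, b, x') \<in> T}"

definition lift :: "('x \<Rightarrow> real) \<Rightarrow> 'x set \<Rightarrow> real" where
  "lift f Y = sup01 (f ` Y)"

definition alpha_T :: "('x \<Rightarrow> real) set \<Rightarrow> 'x set \<Rightarrow> 'x set \<Rightarrow> real" where
  "alpha_T FF X1 X2 = sup01 {tminus (lift f X1) (lift f X2) | f. f \<in> FF}"

definition gamma_T :: "('x set \<Rightarrow> 'x set \<Rightarrow> real) \<Rightarrow> ('x \<Rightarrow> real) set" where
  "gamma_T d = {f. (\<forall>x. 0 \<le> f x \<and> f x \<le> 1) \<and>
      (\<forall>X1 X2. tminus (lift f X1) (lift f X2) \<le> d X1 X2)}"

inductive_set shcl :: "('x \<Rightarrow> real) set \<Rightarrow> ('x \<Rightarrow> real) set" for FF where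
  base: "f \<in> FF \<Longrightarrow> f \<in> shcl FF"
| minus: "f \<in> shcl FF \<Longrightarrow> 0 \<le> c \<Longrightarrow> c \<le> 1 \<Longrightarrow> (\<lambda>x. tminus (f x) c) \<in> shcl FF"
| plus: "f \<in> shcl FF \<Longrightarrow> 0 \<le> c \<Longrightarrow> c \<le> 1 \<Longrightarrow> (\<lambda>x. tplus (f x) c) \<in> shcl FF"

definition lo_T :: "('x \<times> 'a \<times> 'x) set \<Rightarrow> ('a \<Rightarrow> 'a \<Rightarrow> real) \<Rightarrow> ('x \<Rightarrow> real) set \<Rightarrow> ('x \<Rightarrow> real) set" where
  "lo_T T dA FF = (\<Union>a. Next T dA a ` shcl FF) \<union> {\<lambda>x. 1}"

definition beta_T :: "('x \<times> 'a \<times> 'x) set \<Rightarrow> ('a \<Rightarrow> 'a \<Rightarrow> real) \<Rightarrow>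
    ('x set \<Rightarrow> 'x set \<Rightarrow> real) \<Rightarrow> 'x set \<Rightarrow> 'x set \<Rightarrow> real" where
  "beta_T T dA d = alpha_T (lo_T T dA (gamma_T d))"

definition alpha0 :: "('y \<Rightarrow> 'y \<Rightarrow> real) \<Rightarrow> ('y \<times> 'y) set" where
  "alpha0 d = {(Y1, Y2). d Y1 Y2 = 0}"

definition symz :: "('y \<Rightarrow> 'y \<Rightarrow> real) \<Rightarrow> 'y \<Rightarrow> 'y \<Rightarrow> real" where
  "symz d Y1 Y2 = max (d Y1 Y2) (d Y2 Y1)"

(* R is the least fixpoint of beta_t in (Eq(P(X)), \<supseteq>) *)
definition is_lfp_t :: "('x \<times> 'a \<times> 'x) set \<Rightarrow> ('x set \<times> 'x set) set \<Rightarrow> bool" where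
  "is_lfp_t T R \<longleftrightarrow> equiv UNIV R \<and> beta_t T R = R \<and>
     (\<forall>R'. equiv UNIV R' \<and> beta_t T R' = R' \<longrightarrow> R' \<subseteq> R)"

definition is_lfp_T :: "('x \<times> 'a \<times> 'x) set \<Rightarrow> ('a \<Rightarrow> 'a \<Rightarrow> real) \<Rightarrow> ('x set \<Rightarrow> 'x set \<Rightarrow> real) \<Rightarrow> bool" where
  "is_lfp_T T dA d \<longleftrightarrow> dpmet d \<and> beta_T T dA d = d \<and>
     (\<forall>d'. dpmet d' \<and> beta_T T dA d' = d' \<longrightarrow> (\<forall>X1 X2. d X1 X2 \<le> d' X1 X2))"

end

theory Submission
  imports Defs
begin

lemma sup01_upper: "(\<And>s. s \<in> S \<Longrightarrow> s \<le> B) \<Longrightarrow> x \<in> S \<Longrightarrow> x \<le> sup01 S"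
  unfolding sup01_def by (auto intro!: cSup_upper bdd_aboveI)

lemma sup01_least: "(\<And>s. s \<in> S \<Longrightarrow> s \<le> b) \<Longrightarrow> 0 \<le> b \<Longrightarrow> sup01 S \<le> b"
  unfolding sup01_def by (auto intro!: cSup_least)

lemma sup01_ge0: "(\<And>s. s \<in> S \<Longrightarrow> 0 \<le> s) \<Longrightarrow> (\<And>s. s \<in> S \<Longrightarrow> s \<le> B) \<Longrightarrow> 0 \<le> sup01 S"
proof (cases "S = {}")
  case False
  assume a: "\<And>s. s \<in> S \<Longrightarrow> 0 \<le> s" "\<And>s. s \<in> S \<Longrightarrow> s \<le> B"
  from False obtain x where x: "x \<in> S" by auto
  have "x \<le> Sup S" using x a(2) by (intro cSup_upper bdd_aboveI) auto
  then show ?thesis unfolding sup01_def using False a(1)[OF x] by simp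
qed (simp add: sup01_def)

definition vals01 :: "('x \<Rightarrow> real) \<Rightarrow> bool" where
  "vals01 f \<longleftrightarrow> (\<forall>x. 0 \<le> f x \<and> f x \<le> 1)"

lemma lift_bounds: "vals01 f \<Longrightarrow> 0 \<le> lift f Y \<and> lift f Y \<le> 1"
  unfolding lift_def vals01_def by (auto intro!: sup01_ge0[where B=1] sup01_least)

lemma lift_upper: "vals01 f \<Longrightarrow> x \<in> Y \<Longrightarrow> f x \<le> lift f Y"
  unfolding lift_def vals01_def by (rule sup01_upper[where B=1]) auto

lemma lift_least: "(\<And>x. x \<in> Y \<Longrightarrow> f x \<le> b) \<Longrightarrow> 0 \<le> b \<Longrightarrow> lift f Y \<le> b"
  unfolding lift_def by (rule sup01_least) auto

lemma lift_empty[simp]: "lift f {} = 0"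
  unfolding lift_def sup01_def by simp

lemma lift_comm:
  assumes "mono \<phi>" "\<And>t. isCont \<phi> t" "Y \<noteq> {}" "vals01 f"
  shows "lift (\<lambda>x. \<phi> (f x)) Y = \<phi> (lift f Y)"
proof -
  have bdd: "bdd_above (f ` Y)" using assms(4) unfolding vals01_def by (auto intro!: bdd_aboveI)
  have "\<phi> (Sup (f ` Y)) = (SUP s\<in>f ` Y. \<phi> s)"
    by (rule continuous_at_Sup_mono[OF assms(1)])
       (use assms bdd in \<open>auto intro: continuous_at_imp_continuous_at_within\<close>)
  then show ?thesis using assms(3) unfolding lift_def sup01_def by (simp add: image_image)
qed

lemma lift_one: "lift (\<lambda>x. 1) Y = (if Y = {} then 0 else 1)"
  unfolding lift_def sup01_def by auto


lemma shcl_vals: "g \<in> shcl FF \<Longrightarrow> (\<And>f. f \<in> FF \<Longrightarrow> vals01 f) \<Longrightarrow> vals01 g"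
proof (induction rule: shcl.induct)
  case (minus f c) then show ?case unfolding vals01_def tminus_def by (smt (verit))
next
  case (plus f c) then show ?case unfolding vals01_def tplus_def by (smt (verit))
qed auto

lemma Next_vals:
  assumes "metric01 dA" "vals01 f"
  shows "vals01 (Next T dA a f)"
  unfolding vals01_def Next_def
proof
  fix x
  have b: "\<And>b y. 0 \<le> dA b y \<and> dA b y \<le> 1" using assms(1) unfolding metric01_def by blast
  show "0 \<le> sup01 {min (1 - dA b a) (f x') |b x'. (x, b, x') \<in> T} \<and>
        sup01 {min (1 - dA b a) (f x') |b x'. (x, b, x') \<in> T} \<le> 1"
    using b[of _ a] assms(2) unfolding vals01_def
    by (auto intro!: sup01_ge0[where B=1] sup01_least simp: min_le_iff_disj)
qed

lemma Next_upper:
  assumes "metric01 dA" "vals01 f" "(x, b, x') \<in> T"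
  shows "min (1 - dA b a) (f x') \<le> Next T dA a f x"
proof -
  have b: "\<And>b y. 0 \<le> dA b y \<and> dA b y \<le> 1" using assms(1) unfolding metric01_def by blast
  show ?thesis unfolding Next_def
    by (rule sup01_upper[where B=1]) (use assms b in \<open>auto simp: min_le_iff_disj\<close>)
qed

lemma lo_T_vals:
  assumes "metric01 dA" "h \<in> lo_T T dA (gamma_T d)"
  shows "vals01 h"
proof -
  have "\<And>f. f \<in> gamma_T d \<Longrightarrow> vals01 f" unfolding gamma_T_def vals01_def by auto
  note g = this
  from assms(2) consider "h = (\<lambda>x. 1)" | a g where "g \<in> shcl (gamma_T d)" "h = Next T dA a g"
    unfolding lo_T_def by auto
  then show ?thesis
  proof cases
    case 1 then show ?thesis by (simp add: vals01_def)
  next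
    case (2 a f)
    then show ?thesis using Next_vals[OF assms(1) shcl_vals[OF 2(1) g]] by simp
  qed
qed

lemma one_lo_T: "(\<lambda>x. 1) \<in> lo_T T dA FF"
  unfolding lo_T_def by auto

lemma tminus_bounds: "0 \<le> a \<Longrightarrow> a \<le> 1 \<Longrightarrow> 0 \<le> tminus a b \<and> tminus a b \<le> 1" if "0 \<le> b"
  using that unfolding tminus_def by auto

lemma alpha_T_upper:
  assumes "\<And>f. f \<in> FF \<Longrightarrow> vals01 f" "f \<in> FF"
  shows "tminus (lift f X1) (lift f X2) \<le> alpha_T FF X1 X2"
proof -
  have b: "tminus (lift g X1) (lift g X2) \<le> 1" if "g \<in> FF" for g
  proof -
    have "0 \<le> lift g X1 \<and> lift g X1 \<le> 1" "0 \<le> lift g X2 \<and> lift g X2 \<le> 1"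
      using lift_bounds assms that by blast+
    then show ?thesis unfolding tminus_def by auto
  qed
  show ?thesis unfolding alpha_T_def
    by (rule sup01_upper[where B=1]) (use assms(2) b in auto)
qed

lemma alpha_T_least:
  assumes "\<And>f. f \<in> FF \<Longrightarrow> tminus (lift f X1) (lift f X2) \<le> b" "0 \<le> b"
  shows "alpha_T FF X1 X2 \<le> b"
  unfolding alpha_T_def using assms by (auto intro!: sup01_least)

lemma alpha_T_bounds:
  assumes "\<And>f. f \<in> FF \<Longrightarrow> vals01 f"
  shows "0 \<le> alpha_T FF X1 X2 \<and> alpha_T FF X1 X2 \<le> 1"
proof -
  have "\<And>f. f \<in> FF \<Longrightarrow> 0 \<le> tminus (lift f X1) (lift f X2) \<and> tminus (lift f X1) (lift f X2) \<le> 1"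
  proof -
    fix f assume "f \<in> FF"
    then have "0 \<le> lift f X1 \<and> lift f X1 \<le> 1" "0 \<le> lift f X2 \<and> lift f X2 \<le> 1"
      using assms lift_bounds by blast+
    then show "0 \<le> tminus (lift f X1) (lift f X2) \<and> tminus (lift f X1) (lift f X2) \<le> 1"
      unfolding tminus_def by auto
  qed
  then show ?thesis unfolding alpha_T_def by (auto intro!: sup01_ge0[where B=1] sup01_least)
qed

lemma alpha_T_dpmet:
  assumes "\<And>f. f \<in> FF \<Longrightarrow> vals01 f"
  shows "dpmet (alpha_T FF)"
  unfolding dpmet_def
proof (intro conjI allI)
  fix y
  have "alpha_T FF y y \<le> 0" by (rule alpha_T_least) (auto simp: tminus_def)
  then show "alpha_T FF y y = 0"
    using alpha_T_bounds[where FF=FF, OF assms, where ?X1.0=y and ?X2.0=y] by simp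
next
  fix x y z
  show "alpha_T FF x z \<le> tplus (alpha_T FF x y) (alpha_T FF y z)"
  proof (rule alpha_T_least)
    fix f assume f: "f \<in> FF"
    have "tminus (lift f x) (lift f z) \<le> tminus (lift f x) (lift f y) + tminus (lift f y) (lift f z)"
      unfolding tminus_def by auto
    also have "\<dots> \<le> alpha_T FF x y + alpha_T FF y z"
      using alpha_T_upper[OF assms f] by (simp add: add_mono)
    finally have 1: "tminus (lift f x) (lift f z) \<le> alpha_T FF x y + alpha_T FF y z" .
    have "0 \<le> lift f x \<and> lift f x \<le> 1" "0 \<le> lift f z \<and> lift f z \<le> 1"
      using lift_bounds assms f by blast+
    then have 2: "tminus (lift f x) (lift f z) \<le> 1" unfolding tminus_def by auto
    show "tminus (lift f x) (lift f z) \<le> tplus (alpha_T FF x y) (alpha_T FF y z)"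
      using 1 2 unfolding tplus_def by simp
  next
    show "0 \<le> tplus (alpha_T FF x y) (alpha_T FF y z)"
      using alpha_T_bounds[where FF=FF, OF assms] unfolding tplus_def by simp
  qed
next
  fix x y show "0 \<le> alpha_T FF x y" using alpha_T_bounds[where FF=FF, OF assms] by blast
next
  fix x y show "alpha_T FF x y \<le> 1" using alpha_T_bounds[where FF=FF, OF assms] by blast
qed

lemma beta_T_dpmet: "metric01 dA \<Longrightarrow> dpmet (beta_T T dA d)"
  unfolding beta_T_def by (rule alpha_T_dpmet) (rule lo_T_vals)

lemma beta_T_upper: "metric01 dA \<Longrightarrow> h \<in> lo_T T dA (gamma_T d) \<Longrightarrow>
   tminus (lift h X1) (lift h X2) \<le> beta_T T dA d X1 X2"
  unfolding beta_T_def by (rule alpha_T_upper) (auto intro: lo_T_vals)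

lemma beta_T_bounds: "metric01 dA \<Longrightarrow> 0 \<le> beta_T T dA d X1 X2 \<and> beta_T T dA d X1 X2 \<le> 1"
  unfolding beta_T_def by (rule alpha_T_bounds) (auto intro: lo_T_vals)

lemma shcl_mono: "g \<in> shcl FF \<Longrightarrow> FF \<subseteq> GG \<Longrightarrow> g \<in> shcl GG"
  by (induction rule: shcl.induct) (auto intro: shcl.intros)

lemma beta_T_mono:
  assumes "metric01 dA" "\<And>X1 X2. d X1 X2 \<le> d' X1 X2"
  shows "beta_T T dA d X1 X2 \<le> beta_T T dA d' X1 X2"
proof -
  have "gamma_T d \<subseteq> gamma_T d'" using assms(2) unfolding gamma_T_def by (blast intro: order_trans)
  then have "lo_T T dA (gamma_T d) \<subseteq> lo_T T dA (gamma_T d')"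
    unfolding lo_T_def by (auto intro: shcl_mono)
  note sub = this
  show ?thesis unfolding beta_T_def[of T dA d]
  proof (rule alpha_T_least)
    fix f assume "f \<in> lo_T T dA (gamma_T d)"
    then show "tminus (lift f X1) (lift f X2) \<le> beta_T T dA d' X1 X2"
      using sub by (intro beta_T_upper[OF assms(1)]) auto
  next
    show "0 \<le> beta_T T dA d' X1 X2" using beta_T_bounds[OF assms(1)] by blast
  qed
qed


inductive_set PS :: "('x \<times> 'a \<times> 'x) set \<Rightarrow> 'x set set" for T where
  PS_univ: "UNIV \<in> PS T"
| PS_dia: "S \<in> PS T \<Longrightarrow> Diamond T a S \<in> PS T"

definition succ :: "('x \<times> 'a \<times> 'x) set \<Rightarrow> 'a \<Rightarrow> 'x set \<Rightarrow> 'x set" where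
  "succ T b X = {x'. \<exists>x\<in>X. (x, b, x') \<in> T}"

lemma succ_meet: "(succ T b X \<inter> S \<noteq> {}) \<longleftrightarrow> (X \<inter> Diamond T b S \<noteq> {})"
  unfolding succ_def Diamond_def by auto

lemma alpha_t_equiv: "equiv UNIV (alpha_t SS)"
  unfolding equiv_def refl_on_def sym_def trans_def alpha_t_def by auto

lemma alpha_tD: "(X1, X2) \<in> alpha_t SS \<Longrightarrow> S \<in> SS \<Longrightarrow> (X1 \<inter> S \<noteq> {} \<longleftrightarrow> X2 \<inter> S \<noteq> {})"
  unfolding alpha_t_def by auto

lemma Rstar_succ:
  assumes "(X1, X2) \<in> alpha_t (PS T)"
  shows "(succ T b X1, succ T b X2) \<in> alpha_t (PS T)"
  unfolding alpha_t_def
proof (clarify)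
  fix S assume "S \<in> PS T"
  then have "Diamond T b S \<in> PS T" by (rule PS_dia)
  from alpha_tD[OF assms this] show "(succ T b X1 \<inter> S \<noteq> {}) = (succ T b X2 \<inter> S \<noteq> {})"
    by (simp add: succ_meet)
qed

lemma Rstar_empty:
  assumes "(X1, X2) \<in> alpha_t (PS T)" shows "(X1 = {}) = (X2 = {})"
proof -
  have "(X1 \<inter> UNIV \<noteq> {}) = (X2 \<inter> UNIV \<noteq> {})" by (rule alpha_tD[OF assms PS_univ])
  then show ?thesis by simp
qed

lemma beta_t_Rstar: "beta_t T (alpha_t (PS T)) = alpha_t (PS T)"
proof (rule equalityI)
  have "PS T \<subseteq> lo_t T (gamma_t (alpha_t (PS T)))"
  proof
    fix S assume "S \<in> PS T"
    then show "S \<in> lo_t T (gamma_t (alpha_t (PS T)))"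
    proof cases
      case PS_univ then show ?thesis unfolding lo_t_def by auto
    next
      case (PS_dia S' a)
      have "S' \<in> gamma_t (alpha_t (PS T))" using PS_dia(2)
        unfolding gamma_t_def alpha_t_def by auto
      then show ?thesis unfolding lo_t_def PS_dia(1) by auto
    qed
  qed
  then show "beta_t T (alpha_t (PS T)) \<subseteq> alpha_t (PS T)"
    unfolding beta_t_def alpha_t_def by blast
next
  show "alpha_t (PS T) \<subseteq> beta_t T (alpha_t (PS T))"
  proof (rule subsetI)
    fix p assume "p \<in> alpha_t (PS T)"
    then obtain X1 X2 where p: "p = (X1, X2)" and X: "(X1, X2) \<in> alpha_t (PS T)"
      by (cases p) auto
    have "(X1 \<inter> S' \<noteq> {}) = (X2 \<inter> S' \<noteq> {})" if "S' \<in> lo_t T (gamma_t (alpha_t (PS T)))" for S'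
    proof -
      from that consider "S' = UNIV" | a S where "S \<in> gamma_t (alpha_t (PS T))" "S' = Diamond T a S"
        unfolding lo_t_def by auto
      then show "(X1 \<inter> S' \<noteq> {}) = (X2 \<inter> S' \<noteq> {})"
      proof cases
        case 1 then show ?thesis using alpha_tD[OF X PS_univ] by simp
      next
        case (2 a S)
        have "(succ T a X1, succ T a X2) \<in> alpha_t (PS T)" by (rule Rstar_succ[OF X])
        then have "(succ T a X1 \<inter> S \<noteq> {}) = (succ T a X2 \<inter> S \<noteq> {})"
          using 2(1) unfolding gamma_t_def by auto
        then show ?thesis unfolding 2(2) by (simp add: succ_meet)
      qed
    qed
    then show "p \<in> beta_t T (alpha_t (PS T))"
      unfolding beta_t_def alpha_t_def p by blast
  qed
qed

lemma gamma_tI: "(\<And>X1 X2. (X1, X2) \<in> R \<Longrightarrow> (X1 \<inter> S \<noteq> {}) = (X2 \<inter> S \<noteq> {})) \<Longrightarrow> S \<in> gamma_t R"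
  unfolding gamma_t_def by auto

lemma gamma_tD: "S \<in> gamma_t R \<Longrightarrow> (X1, X2) \<in> R \<Longrightarrow> (X1 \<inter> S \<noteq> {}) = (X2 \<inter> S \<noteq> {})"
  unfolding gamma_t_def by auto

lemma alpha_tI: "(\<And>S. S \<in> SS \<Longrightarrow> (X1 \<inter> S \<noteq> {}) = (X2 \<inter> S \<noteq> {})) \<Longrightarrow> (X1, X2) \<in> alpha_t SS"
  unfolding alpha_t_def by auto

lemma fix_agree:
  assumes "beta_t T R = R" "(X1, X2) \<in> R" "S \<in> lo_t T (gamma_t R)"
  shows "(X1 \<inter> S \<noteq> {}) = (X2 \<inter> S \<noteq> {})"
proof -
  have "(X1, X2) \<in> alpha_t (lo_t T (gamma_t R))" using assms(1,2) unfolding beta_t_def by simp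
  then show ?thesis using assms(3) by (rule alpha_tD)
qed

lemma lfp_t_greatest:
  assumes "beta_t T R' = R'"
  shows "R' \<subseteq> alpha_t (PS T)"
proof -
  have PSg: "S \<in> gamma_t R'" if "S \<in> PS T" for S
    using that
  proof induction
    case PS_univ
    have "UNIV \<in> lo_t T (gamma_t R')" unfolding lo_t_def by auto
    then show ?case by (intro gamma_tI fix_agree[OF assms])
  next
    case (PS_dia S a)
    have "Diamond T a S \<in> lo_t T (gamma_t R')" using PS_dia(2) unfolding lo_t_def by auto
    then show ?case by (intro gamma_tI fix_agree[OF assms])
  qed
  show ?thesis
  proof (rule subsetI)
    fix p assume "p \<in> R'"
    then obtain X1 X2 where p: "p = (X1, X2)" "(X1, X2) \<in> R'" by (cases p) auto
    show "p \<in> alpha_t (PS T)" unfolding p(1)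
      by (rule alpha_tI) (rule gamma_tD[OF PSg p(2)])
  qed
qed

lemma is_lfp_t_Rstar: "is_lfp_t T (alpha_t (PS T))"
  unfolding is_lfp_t_def using alpha_t_equiv beta_t_Rstar lfp_t_greatest by blast


lemma alpha_t_sym: "(Y1, Y2) \<in> alpha_t SS \<Longrightarrow> (Y2, Y1) \<in> alpha_t SS"
  unfolding alpha_t_def by auto

definition dR :: "('y \<times> 'y) set \<Rightarrow> 'y \<Rightarrow> 'y \<Rightarrow> real" where
  "dR R Y1 Y2 = (if (Y1, Y2) \<in> R then 0 else 1)"

lemma dR_dpmet:
  assumes "equiv UNIV R" shows "dpmet (dR R)"
  unfolding dpmet_def
proof (intro conjI allI)
  fix y show "dR R y y = 0" using assms unfolding dR_def equiv_def refl_on_def by auto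
next
  fix x y z
  show "dR R x z \<le> tplus (dR R x y) (dR R y z)"
  proof (cases "(x, z) \<in> R")
    case True then show ?thesis unfolding dR_def tplus_def by auto
  next
    case False
    then have "(x, y) \<notin> R \<or> (y, z) \<notin> R" using assms unfolding equiv_def trans_def by blast
    then show ?thesis unfolding dR_def tplus_def by auto
  qed
next
  fix x y show "0 \<le> dR R x y" unfolding dR_def by auto
next
  fix x y show "dR R x y \<le> 1" unfolding dR_def by auto
qed

lemma mono_tminus: "mono (\<lambda>t. tminus t c)" unfolding mono_def tminus_def by auto
lemma mono_tplus: "mono (\<lambda>t. tplus t c)" unfolding mono_def tplus_def by auto
lemma mono_min: "mono (\<lambda>t::real. min k t)" unfolding mono_def by auto
lemma cont_tminus: "isCont (\<lambda>t. tminus t c) t" unfolding tminus_def by (intro continuous_intros)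
lemma cont_tplus: "isCont (\<lambda>t. tplus t c) t" unfolding tplus_def by (intro continuous_intros)
lemma cont_min: "isCont (\<lambda>t::real. min k t) t" by (intro continuous_intros)

lemma gamma_T_vals: "f \<in> gamma_T d \<Longrightarrow> vals01 f"
  unfolding gamma_T_def vals01_def by auto

lemma gamma_TD: "f \<in> gamma_T d \<Longrightarrow> tminus (lift f X1) (lift f X2) \<le> d X1 X2"
  unfolding gamma_T_def by auto

lemma gamma_TI: "vals01 f \<Longrightarrow> (\<And>X1 X2. tminus (lift f X1) (lift f X2) \<le> d X1 X2) \<Longrightarrow> f \<in> gamma_T d"
  unfolding gamma_T_def vals01_def by auto

lemma shcl_resp:
  assumes "g \<in> shcl (gamma_T (dR (alpha_t (PS T))))" "(Y1, Y2) \<in> alpha_t (PS T)"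
  shows "lift g Y1 = lift g Y2"
  using assms
proof (induction arbitrary: Y1 Y2 rule: shcl.induct)
  case (base f)
  have "lift f Y1 \<le> lift f Y2" if "(Y1, Y2) \<in> alpha_t (PS T)" for Y1 Y2
    using gamma_TD[OF base(1), of Y1 Y2] that unfolding dR_def tminus_def by auto
  then show ?case using base(2) alpha_t_sym[OF base(2)] by (meson antisym)
next
  case (minus f c)
  have vf: "vals01 f" using minus(1) gamma_T_vals shcl_vals by blast
  show ?case
  proof (cases "Y1 = {}")
    case True
    then have "Y2 = {}" using Rstar_empty[OF minus(5)] by simp
    then show ?thesis using True by simp
  next
    case False
    then have "Y2 \<noteq> {}" using Rstar_empty[OF minus(5)] by simp
    then show ?thesis
      using lift_comm[OF mono_tminus cont_tminus False vf] lift_comm[OF mono_tminus cont_tminus _ vf, of Y2]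
        minus(4)[OF minus(5)] by simp
  qed
next
  case (plus f c)
  have vf: "vals01 f" using plus(1) gamma_T_vals shcl_vals by blast
  show ?case
  proof (cases "Y1 = {}")
    case True
    then have "Y2 = {}" using Rstar_empty[OF plus(5)] by simp
    then show ?thesis using True by simp
  next
    case False
    then have "Y2 \<noteq> {}" using Rstar_empty[OF plus(5)] by simp
    then show ?thesis
      using lift_comm[OF mono_tplus cont_tplus False vf] lift_comm[OF mono_tplus cont_tplus _ vf, of Y2]
        plus(4)[OF plus(5)] by simp
  qed
qed

lemma Next_resp:
  assumes dA: "metric01 dA" and vg: "vals01 g"
    and resp: "\<And>Y1 Y2. (Y1, Y2) \<in> alpha_t (PS T) \<Longrightarrow> lift g Y1 = lift g Y2"
    and X: "(X1, X2) \<in> alpha_t (PS T)"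
  shows "lift (Next T dA a g) X1 \<le> lift (Next T dA a g) X2"
proof (rule lift_least)
  have vN: "vals01 (Next T dA a g)" by (rule Next_vals[OF dA vg])
  show "0 \<le> lift (Next T dA a g) X2" using lift_bounds[OF vN] by blast
  fix x assume x: "x \<in> X1"
  show "Next T dA a g x \<le> lift (Next T dA a g) X2" unfolding Next_def[of T dA a g x]
  proof (rule sup01_least)
    fix s assume "s \<in> {min (1 - dA b a) (g x') |b x'. (x, b, x') \<in> T}"
    then obtain b x' where s: "s = min (1 - dA b a) (g x')" and tr: "(x, b, x') \<in> T" by blast
    define k where "k = 1 - dA b a"
    have Y: "(succ T b X1, succ T b X2) \<in> alpha_t (PS T)" by (rule Rstar_succ[OF X])
    have x'Y: "x' \<in> succ T b X1" using x tr unfolding succ_def by auto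
    then have ne: "succ T b X2 \<noteq> {}" using Rstar_empty[OF Y] by auto
    have "g x' \<le> lift g (succ T b X1)" by (rule lift_upper[OF vg x'Y])
    also have "\<dots> = lift g (succ T b X2)" by (rule resp[OF Y])
    finally have "s \<le> min k (lift g (succ T b X2))" unfolding s k_def by (simp add: min.coboundedI2)
    also have "\<dots> = lift (\<lambda>y. min k (g y)) (succ T b X2)"
      by (rule lift_comm[OF mono_min cont_min ne vg, symmetric])
    also have "\<dots> \<le> lift (Next T dA a g) X2"
    proof (rule lift_least)
      fix y assume "y \<in> succ T b X2"
      then obtain x2 where x2: "x2 \<in> X2" "(x2, b, y) \<in> T" unfolding succ_def by auto
      have "min k (g y) \<le> Next T dA a g x2" unfolding k_def by (rule Next_upper[OF dA vg x2(2)])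
      also have "\<dots> \<le> lift (Next T dA a g) X2" by (rule lift_upper[OF vN x2(1)])
      finally show "min k (g y) \<le> lift (Next T dA a g) X2" .
    qed (rule \<open>0 \<le> lift (Next T dA a g) X2\<close>)
    finally show "s \<le> lift (Next T dA a g) X2" .
  qed (rule \<open>0 \<le> lift (Next T dA a g) X2\<close>)
qed

lemma beta_dR_zero:
  assumes dA: "metric01 dA" and X: "(X1, X2) \<in> alpha_t (PS T)"
  shows "beta_T T dA (dR (alpha_t (PS T))) X1 X2 = 0"
proof -
  have "beta_T T dA (dR (alpha_t (PS T))) X1 X2 \<le> 0"
    unfolding beta_T_def
  proof (rule alpha_T_least)
    fix h assume "h \<in> lo_T T dA (gamma_T (dR (alpha_t (PS T))))"
    then consider "h = (\<lambda>x. 1)" | a g where "g \<in> shcl (gamma_T (dR (alpha_t (PS T))))" "h = Next T dA a g"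
      unfolding lo_T_def by auto
    then have "lift h X1 \<le> lift h X2"
    proof cases
      case 1 then show ?thesis using Rstar_empty[OF X] by (simp add: lift_one)
    next
      case (2 a g)
      have vg: "vals01 g" using 2(1) gamma_T_vals shcl_vals by blast
      show ?thesis unfolding 2(2)
        by (rule Next_resp[OF dA vg shcl_resp[OF 2(1)] X])
    qed
    then show "tminus (lift h X1) (lift h X2) \<le> 0" unfolding tminus_def by simp
  qed simp
  then show ?thesis using beta_T_bounds[OF dA] by (meson antisym)
qed

lemma dR_pre:
  assumes dA: "metric01 dA"
  shows "beta_T T dA (dR (alpha_t (PS T))) X1 X2 \<le> dR (alpha_t (PS T)) X1 X2"
proof (cases "(X1, X2) \<in> alpha_t (PS T)")
  case True then show ?thesis using beta_dR_zero[OF dA True] unfolding dR_def by simp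
next
  case False
  have "beta_T T dA (dR (alpha_t (PS T))) X1 X2 \<le> 1" using beta_T_bounds[OF dA] by blast
  then show ?thesis using False unfolding dR_def by simp
qed


definition PreF :: "('x \<times> 'a \<times> 'x) set \<Rightarrow> ('a \<Rightarrow> 'a \<Rightarrow> real) \<Rightarrow> ('x set \<Rightarrow> 'x set \<Rightarrow> real) set" where
  "PreF T dA = {d. dpmet d \<and> (\<forall>X1 X2. beta_T T dA d X1 X2 \<le> d X1 X2)}"

definition LowF :: "('x \<times> 'a \<times> 'x) set \<Rightarrow> ('a \<Rightarrow> 'a \<Rightarrow> real) \<Rightarrow> ('x set \<Rightarrow> 'x set \<Rightarrow> real) set" where
  "LowF T dA = {e. dpmet e \<and> (\<forall>d\<in>PreF T dA. \<forall>X1 X2. e X1 X2 \<le> d X1 X2)}"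

definition mstar :: "('x \<times> 'a \<times> 'x) set \<Rightarrow> ('a \<Rightarrow> 'a \<Rightarrow> real) \<Rightarrow> 'x set \<Rightarrow> 'x set \<Rightarrow> real" where
  "mstar T dA X1 X2 = Sup {e X1 X2 | e. e \<in> LowF T dA}"

lemma dpmet_bounds: "dpmet d \<Longrightarrow> 0 \<le> d x y \<and> d x y \<le> 1"
  unfolding dpmet_def by blast

lemma zero_LowF: "(\<lambda>_ _. 0) \<in> LowF T dA"
  unfolding LowF_def PreF_def dpmet_def tplus_def by auto

lemma mstar_upper: "e \<in> LowF T dA \<Longrightarrow> e X1 X2 \<le> mstar T dA X1 X2"
  unfolding mstar_def
  by (rule cSup_upper) (auto simp: LowF_def intro!: bdd_aboveI[where M=1] dest: dpmet_bounds)

lemma mstar_least: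
  assumes "\<And>e. e \<in> LowF T dA \<Longrightarrow> e X1 X2 \<le> b"
  shows "mstar T dA X1 X2 \<le> b"
  unfolding mstar_def
proof (rule cSup_least)
  show "{e X1 X2 |e. e \<in> LowF T dA} \<noteq> {}" using zero_LowF by blast
qed (use assms in auto)

lemma mstar_le_Pre: "d \<in> PreF T dA \<Longrightarrow> mstar T dA X1 X2 \<le> d X1 X2"
  by (rule mstar_least) (auto simp: LowF_def)

lemma tplus_mono: "a \<le> a' \<Longrightarrow> b \<le> b' \<Longrightarrow> tplus a b \<le> tplus a' b'"
  unfolding tplus_def by auto

lemma mstar_ge0: "0 \<le> mstar T dA X1 X2"
proof -
  have "(\<lambda>_ _. 0::real) X1 X2 \<le> mstar T dA X1 X2" by (rule mstar_upper[OF zero_LowF])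
  then show ?thesis by simp
qed

lemma mstar_dpmet: "dpmet (mstar T dA)"
  unfolding dpmet_def
proof (intro conjI allI)
  fix y
  have "mstar T dA y y \<le> 0" by (rule mstar_least) (auto simp: LowF_def dpmet_def)
  moreover have "0 \<le> mstar T dA y y" by (rule mstar_ge0)
  ultimately show "mstar T dA y y = 0" by simp
next
  fix x y z
  show "mstar T dA x z \<le> tplus (mstar T dA x y) (mstar T dA y z)"
  proof (rule mstar_least)
    fix e assume e: "e \<in> LowF T dA"
    then have "e x z \<le> tplus (e x y) (e y z)" unfolding LowF_def dpmet_def by blast
    also have "\<dots> \<le> tplus (mstar T dA x y) (mstar T dA y z)"
      by (intro tplus_mono mstar_upper e)
    finally show "e x z \<le> tplus (mstar T dA x y) (mstar T dA y z)" .
  qed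
next
  fix x y show "0 \<le> mstar T dA x y" by (rule mstar_ge0)
next
  fix x y show "mstar T dA x y \<le> 1"
    by (rule mstar_least) (auto simp: LowF_def dest: dpmet_bounds)
qed

lemma mstar_LowF: "mstar T dA \<in> LowF T dA"
  unfolding LowF_def using mstar_dpmet mstar_le_Pre by blast

lemma mstar_fix:
  assumes dA: "metric01 dA"
  shows "beta_T T dA (mstar T dA) = mstar T dA"
proof -
  let ?m = "mstar T dA"
  have "beta_T T dA ?m \<in> LowF T dA"
    unfolding LowF_def
  proof (intro CollectI conjI ballI allI)
    show "dpmet (beta_T T dA ?m)" by (rule beta_T_dpmet[OF dA])
    fix d X1 X2 assume d: "d \<in> PreF T dA"
    have "beta_T T dA ?m X1 X2 \<le> beta_T T dA d X1 X2"
      by (rule beta_T_mono[OF dA]) (rule mstar_le_Pre[OF d])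
    also have "\<dots> \<le> d X1 X2" using d unfolding PreF_def by blast
    finally show "beta_T T dA ?m X1 X2 \<le> d X1 X2" .
  qed
  then have le: "\<And>X1 X2. beta_T T dA ?m X1 X2 \<le> ?m X1 X2" by (rule mstar_upper)
  have "beta_T T dA ?m \<in> PreF T dA"
    unfolding PreF_def
  proof (intro CollectI conjI allI)
    show "dpmet (beta_T T dA ?m)" by (rule beta_T_dpmet[OF dA])
    fix X1 X2 show "beta_T T dA (beta_T T dA ?m) X1 X2 \<le> beta_T T dA ?m X1 X2"
      by (rule beta_T_mono[OF dA le])
  qed
  then have ge: "\<And>X1 X2. ?m X1 X2 \<le> beta_T T dA ?m X1 X2" by (rule mstar_le_Pre)
  show ?thesis using le ge by (intro ext antisym)
qed

lemma is_lfp_T_mstar: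
  assumes dA: "metric01 dA"
  shows "is_lfp_T T dA (mstar T dA)"
  unfolding is_lfp_T_def
proof (intro conjI allI impI)
  show "dpmet (mstar T dA)" by (rule mstar_dpmet)
  show "beta_T T dA (mstar T dA) = mstar T dA" by (rule mstar_fix[OF dA])
  fix d' X1 X2 assume d': "dpmet d' \<and> beta_T T dA d' = d'"
  then have "d' \<in> PreF T dA" unfolding PreF_def by auto
  then show "mstar T dA X1 X2 \<le> d' X1 X2" by (rule mstar_le_Pre)
qed

lemma Rstar_sub_kernel:
  assumes dA: "metric01 dA" and X: "(X1, X2) \<in> alpha_t (PS T)"
  shows "mstar T dA X1 X2 = 0"
proof -
  have "dR (alpha_t (PS T)) \<in> PreF T dA"
    unfolding PreF_def using dR_dpmet[OF alpha_t_equiv] dR_pre[OF dA] by blast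
  then have "mstar T dA X1 X2 \<le> dR (alpha_t (PS T)) X1 X2" by (rule mstar_le_Pre)
  then show ?thesis using X dpmet_bounds[OF mstar_dpmet, of T dA X1 X2] unfolding dR_def by simp
qed

lemma PS_witness:
  fixes T :: "('x \<times> 'a::finite \<times> 'x) set"
  assumes dA: "metric01 dA" and fx: "beta_T T dA m = m" and S: "S \<in> PS T"
  shows "\<exists>g \<epsilon>. 0 < \<epsilon> \<and> \<epsilon> \<le> 1 \<and> g \<in> gamma_T m \<and> (\<forall>x\<in>S. g x = 1) \<and> (\<forall>x. x \<notin> S \<longrightarrow> g x \<le> 1 - \<epsilon>)"
  using S
proof induction
  case PS_univ
  have "(\<lambda>x. 1) \<in> gamma_T m"
  proof (rule gamma_TI)
    show "vals01 (\<lambda>x. 1::real)" by (simp add: vals01_def)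
    fix X1 X2
    show "tminus (lift (\<lambda>x. 1) X1) (lift (\<lambda>x. 1) X2) \<le> m X1 X2"
    proof -
      have "tminus (lift (\<lambda>x. 1) X1) (lift (\<lambda>x. 1) X2) \<le> beta_T T dA m X1 X2"
        by (rule beta_T_upper[OF dA one_lo_T])
      then show ?thesis using fx by simp
    qed
  qed
  then show ?case by (intro exI[of _ "\<lambda>x. 1"] exI[of _ 1]) auto
next
  case (PS_dia S a)
  from PS_dia(2) obtain g \<epsilon> where g: "0 < \<epsilon>" "\<epsilon> \<le> 1" "g \<in> gamma_T m" "\<forall>x\<in>S. g x = 1"
    "\<forall>x. x \<notin> S \<longrightarrow> g x \<le> 1 - \<epsilon>" by blast
  have vg: "vals01 g" by (rule gamma_T_vals[OF g(3)])
  define D where "D = ((\<lambda>b. dA b a) ` {b. b \<noteq> a}) \<union> {1}"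
  define \<delta> where "\<delta> = Min D"
  have finD: "finite D" unfolding D_def by simp
  have dApos: "\<And>b. b \<noteq> a \<Longrightarrow> 0 < dA b a"
    using dA unfolding metric01_def by (metis less_eq_real_def)
  have "0 < \<delta>" unfolding \<delta>_def using finD dApos by (subst Min_gr_iff) (auto simp: D_def)
  have \<delta>le: "\<And>b. b \<noteq> a \<Longrightarrow> \<delta> \<le> dA b a" unfolding \<delta>_def D_def by (rule Min_le) auto
  define \<epsilon>' where "\<epsilon>' = min \<epsilon> \<delta>"
  define g' where "g' = Next T dA a g"
  have vg': "vals01 g'" unfolding g'_def by (rule Next_vals[OF dA vg])
  have "g \<in> shcl (gamma_T m)" using g(3) by (rule shcl.base)
  then have g'lo: "g' \<in> lo_T T dA (gamma_T m)" unfolding lo_T_def g'_def by auto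
  have "g' \<in> gamma_T m"
  proof (rule gamma_TI[OF vg'])
    fix X1 X2 show "tminus (lift g' X1) (lift g' X2) \<le> m X1 X2"
    proof -
      have "tminus (lift g' X1) (lift g' X2) \<le> beta_T T dA m X1 X2"
        by (rule beta_T_upper[OF dA g'lo])
      then show ?thesis using fx by simp
    qed
  qed
  moreover have "\<forall>x\<in>Diamond T a S. g' x = 1"
  proof
    fix x assume "x \<in> Diamond T a S"
    then obtain x' where x': "x' \<in> S" "(x, a, x') \<in> T" unfolding Diamond_def by auto
    have "dA a a = 0" using dA unfolding metric01_def by blast
    then have "1 \<le> g' x" using Next_upper[OF dA vg x'(2), of a] g(4) x'(1) unfolding g'_def by simp
    then show "g' x = 1" using vg' unfolding vals01_def by (meson antisym)
  qed
  moreover have "\<forall>x. x \<notin> Diamond T a S \<longrightarrow> g' x \<le> 1 - \<epsilon>'"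
  proof (intro allI impI)
    fix x assume nx: "x \<notin> Diamond T a S"
    show "g' x \<le> 1 - \<epsilon>'" unfolding g'_def Next_def
    proof (rule sup01_least)
      fix s assume "s \<in> {min (1 - dA b a) (g x') |b x'. (x, b, x') \<in> T}"
      then obtain b x' where s: "s = min (1 - dA b a) (g x')" and tr: "(x, b, x') \<in> T" by blast
      show "s \<le> 1 - \<epsilon>'"
      proof (cases "b = a")
        case True
        then have "x' \<notin> S" using nx tr unfolding Diamond_def by auto
        then have "g x' \<le> 1 - \<epsilon>" using g(5) by blast
        then show ?thesis unfolding s \<epsilon>'_def by linarith
      next
        case False
        then have "1 - dA b a \<le> 1 - \<delta>" using \<delta>le by simp
        then show ?thesis unfolding s \<epsilon>'_def by linarith
      qed
    qed (use g(2) in \<open>simp add: \<epsilon>'_def min_le_iff_disj\<close>)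
  qed
  moreover have "0 < \<epsilon>'" "\<epsilon>' \<le> 1" unfolding \<epsilon>'_def using g(1,2) \<open>0 < \<delta>\<close> by auto
  ultimately show ?case by blast
qed

lemma kernel_sub_Rstar:
  fixes T :: "('x \<times> 'a::finite \<times> 'x) set"
  assumes dA: "metric01 dA" and fx: "beta_T T dA m = m"
    and z: "m X1 X2 = 0" and S: "S \<in> PS T" and X1S: "X1 \<inter> S \<noteq> {}"
  shows "X2 \<inter> S \<noteq> {}"
proof (rule ccontr)
  assume "\<not> X2 \<inter> S \<noteq> {}"
  then have X2S: "\<forall>x\<in>X2. x \<notin> S" by auto
  obtain g \<epsilon> where g: "0 < \<epsilon>" "\<epsilon> \<le> 1" "g \<in> gamma_T m" "\<forall>x\<in>S. g x = 1"
    "\<forall>x. x \<notin> S \<longrightarrow> g x \<le> 1 - \<epsilon>" using PS_witness[OF dA fx S] by blast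
  have vg: "vals01 g" by (rule gamma_T_vals[OF g(3)])
  from X1S obtain x where x: "x \<in> X1" "x \<in> S" by auto
  have "1 \<le> lift g X1" using lift_upper[OF vg x(1)] g(4) x(2) by simp
  moreover have "lift g X2 \<le> 1 - \<epsilon>" by (rule lift_least) (use X2S g(2,5) in auto)
  moreover have "tminus (lift g X1) (lift g X2) \<le> 0" using gamma_TD[OF g(3), of X1 X2] z by simp
  ultimately show False using g(1) unfolding tminus_def by linarith
qed

theorem mainTheorem17:
  fixes T :: "('x \<times> 'a::finite \<times> 'x) set"
    and dA :: "'a \<Rightarrow> 'a \<Rightarrow> real"
  assumes "metric01 dA"
  shows "\<exists>R d. is_lfp_t T R \<and> is_lfp_T T dA d \<and> R = alpha0 (symz d)"
proof (intro exI conjI)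
  show "is_lfp_t T (alpha_t (PS T))" by (rule is_lfp_t_Rstar)
  show "is_lfp_T T dA (mstar T dA)" by (rule is_lfp_T_mstar[OF assms])
  show "alpha_t (PS T) = alpha0 (symz (mstar T dA))"
  proof (rule equalityI; rule subsetI)
    fix p assume "p \<in> alpha_t (PS T)"
    then obtain X1 X2 where p: "p = (X1, X2)" "(X1, X2) \<in> alpha_t (PS T)" by (cases p) auto
    have "mstar T dA X1 X2 = 0" by (rule Rstar_sub_kernel[OF assms p(2)])
    moreover have "mstar T dA X2 X1 = 0" by (rule Rstar_sub_kernel[OF assms alpha_t_sym[OF p(2)]])
    ultimately show "p \<in> alpha0 (symz (mstar T dA))" unfolding p(1) alpha0_def symz_def by simp
  next
    fix p assume "p \<in> alpha0 (symz (mstar T dA))"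
    then obtain X1 X2 where p: "p = (X1, X2)" "symz (mstar T dA) X1 X2 = 0"
      unfolding alpha0_def by auto
    have b: "0 \<le> mstar T dA X1 X2" "0 \<le> mstar T dA X2 X1"
      using dpmet_bounds[OF mstar_dpmet] by blast+
    then have z1: "mstar T dA X1 X2 = 0" and z2: "mstar T dA X2 X1 = 0"
      using p(2) unfolding symz_def by linarith+
    have fx: "beta_T T dA (mstar T dA) = mstar T dA" by (rule mstar_fix[OF assms])
    show "p \<in> alpha_t (PS T)" unfolding p(1)
    proof (rule alpha_tI)
      fix S assume S: "S \<in> PS T"
      show "(X1 \<inter> S \<noteq> {}) = (X2 \<inter> S \<noteq> {})"
        using kernel_sub_Rstar[OF assms fx z1 S] kernel_sub_Rstar[OF assms fx z2 S] by blast
    qed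
  qed
qed

end
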